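(* Let $\beta\in(1,3/2]$, let $\vec z\in S_\beta$ and let $\vec z=\sum_{i=1}^\infty a_i\beta^{-i}$ with $a_i\in\{\vec q_0,\vec q_1,\vec q_2\}$ be any representation of $\vec z$ in base $\beta$. Then there exist $\omega\in\Omega$ and $\upsilon\in\Upsilon$ such that $a_i=d_i(\omega,\upsilon,\vec z)$ for all $i\ge1$.
   Context: $\vec q_0=(0,0)$, $\vec q_1=(1,0)$, $\vec q_2=(0,1)$; $S_\beta$ is the attractor of the IFS $f_{\vec q_i}(\vec z)=(\vec z+\vec q_i)/\beta$ (for $1<\beta\le3/2$ the closed triangle with vertices $(0,0)$, $(\frac1{\beta-1},0)$, $(0,\frac1{\beta-1})$). Subsets of $S_\beta$: $E_0=[0,\frac1\beta)\times[0,\frac1\beta)$; $E_1=\{0\le y<\frac1\beta,\ \frac{1}{\beta(\beta-1)}<x+y\le\frac{1}{\beta-1}\}$; $E_2=\{0\le x<\frac1\beta,\ \frac{1}{\beta(\beta-1)}<x+y\le\frac{1}{\beta-1}\}$; $C_{01}=\{x\ge\frac1\beta,\ 0\le y<\frac1\beta,\ x+y\le\frac{1}{\beta(\beta-1)}\}$; $C_{12}=\{x\ge\frac1\beta,\ y\ge\frac1\beta,\ \frac{1}{\beta(\beta-1)}<x+y\le\frac{1}{\beta-1}\}$; $C_{02}=\{0\le x<\frac1\beta,\ y\ge\frac1\beta,\ x+y\le\frac{1}{\beta(\beta-1)}\}$; $C_{012}=\{x\ge\frac1\beta,\ y\ge\frac1\beta,\ x+y\le\frac{1}{\beta(\beta-1)}\}$.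 $\Omega=\{0,1\}^{\mathbb N}$, $\Upsilon=\{0,1,2\}^{\mathbb N}$ with left shifts $\sigma,\sigma'$. $K_\beta:\Omega\times\Upsilon\times S_\beta\to\Omega\times\Upsilon\times S_\beta$: $K_\beta(\omega,\upsilon,\vec z)=(\omega,\upsilon,\beta\vec z-\vec q_i)$ if $\vec z\in E_i$; $(\sigma\omega,\upsilon,\beta\vec z-\vec q_i)$ if $\omega_1=0$, $\vec z\in C_{ij}$ ($ij\in\{01,12,02\}$); $(\sigma\omega,\upsilon,\beta\vec z-\vec q_j)$ if $\omega_1=1$, $\vec z\in C_{ij}$; $(\omega,\sigma'\upsilon,\beta\vec z-\vec q_i)$ if $\vec z\in C_{012}$ and $\upsilon_1=i$. The digit $d_1(\omega,\upsilon,\vec z)$ is the vector subtracted in this definition, and $d_n=d_1\circ K_\beta^{n-1}$. *)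

theory Defs
  imports "HOL-Analysis.Analysis"
begin

definition qv :: "nat \<Rightarrow> real \<times> real" where
  "qv i = (if i = 1 then 1 else 0, if i = 2 then 1 else 0)"

text \<open>S_beta for 1 < beta <= 3/2: the closed triangle.\<close>
definition S_beta :: "real \<Rightarrow> (real \<times> real) set" where
  "S_beta b = {(x, y). 0 \<le> x \<and> 0 \<le> y \<and> x + y \<le> 1 / (b - 1)}"

definition inE0 :: "real \<Rightarrow> real \<times> real \<Rightarrow> bool" where
  "inE0 b z = (case z of (x, y) \<Rightarrow> 0 \<le> x \<and> x < 1/b \<and> 0 \<le> y \<and> y < 1/b)"
definition inE1 :: "real \<Rightarrow> real \<times> real \<Rightarrow> bool" where
  "inE1 b z = (case z of (x, y) \<Rightarrow> 0 \<le> y \<and> y < 1/b \<and>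
      1/(b*(b-1)) < x + y \<and> x + y \<le> 1/(b-1))"
definition inE2 :: "real \<Rightarrow> real \<times> real \<Rightarrow> bool" where
  "inE2 b z = (case z of (x, y) \<Rightarrow> 0 \<le> x \<and> x < 1/b \<and>
      1/(b*(b-1)) < x + y \<and> x + y \<le> 1/(b-1))"
definition inC01 :: "real \<Rightarrow> real \<times> real \<Rightarrow> bool" where
  "inC01 b z = (case z of (x, y) \<Rightarrow> x \<ge> 1/b \<and> 0 \<le> y \<and> y < 1/b \<and> x + y \<le> 1/(b*(b-1)))"
definition inC12 :: "real \<Rightarrow> real \<times> real \<Rightarrow> bool" where
  "inC12 b z = (case z of (x, y) \<Rightarrow> x \<ge> 1/b \<and> y \<ge> 1/b \<and>
      1/(b*(b-1)) < x + y \<and> x + y \<le> 1/(b-1))"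
definition inC02 :: "real \<Rightarrow> real \<times> real \<Rightarrow> bool" where
  "inC02 b z = (case z of (x, y) \<Rightarrow> 0 \<le> x \<and> x < 1/b \<and> y \<ge> 1/b \<and> x + y \<le> 1/(b*(b-1)))"
definition inC012 :: "real \<Rightarrow> real \<times> real \<Rightarrow> bool" where
  "inC012 b z = (case z of (x, y) \<Rightarrow> x \<ge> 1/b \<and> y \<ge> 1/b \<and> x + y \<le> 1/(b*(b-1)))"

text \<open>Sequences: omega :: nat => nat with values in {0,1} (Omega), upsilon :: nat => nat
  with values in {0,1,2} (Upsilon); index 0 holds the first symbol omega_1.\<close>
definition shift :: "(nat \<Rightarrow> nat) \<Rightarrow> nat \<Rightarrow> nat" where
  "shift w = (\<lambda>n. w (Suc n))"

type_synonym state = "(nat \<Rightarrow> nat) \<times> (nat \<Rightarrow> nat) \<times> (real \<times> real)"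

text \<open>Index of the digit vector subtracted by K_beta (so d_1 = qv of it).
  Points outside all regions (outside S_beta) get an arbitrary value.\<close>
definition digit_idx :: "real \<Rightarrow> state \<Rightarrow> nat" where
  "digit_idx b s = (case s of (w, u, z) \<Rightarrow>
     if inE0 b z then 0
     else if inE1 b z then 1
     else if inE2 b z then 2
     else if inC01 b z then (if w 0 = 0 then 0 else 1)
     else if inC12 b z then (if w 0 = 0 then 1 else 2)
     else if inC02 b z then (if w 0 = 0 then 0 else 2)
     else if inC012 b z then u 0
     else 0)"

definition K_beta :: "real \<Rightarrow> state \<Rightarrow> state" where
  "K_beta b s = (case s of (w, u, z) \<Rightarrow>
     let z' = b *\<^sub>R z - qv (digit_idx b s) in
     if inE0 b z \<or> inE1 b z \<or> inE2 b z then (w, u, z')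
     else if inC01 b z \<or> inC12 b z \<or> inC02 b z then (shift w, u, z')
     else if inC012 b z then (w, shift u, z')
     else (w, u, z'))"

definition d1 :: "real \<Rightarrow> state \<Rightarrow> real \<times> real" where
  "d1 b s = qv (digit_idx b s)"

definition dn :: "real \<Rightarrow> nat \<Rightarrow> state \<Rightarrow> real \<times> real" where
  "dn b n s = d1 b ((K_beta b ^^ (n - 1)) s)"

end

theory Submission
  imports Defs
begin

fun cnt :: "(nat \<Rightarrow> bool) \<Rightarrow> nat \<Rightarrow> nat" where
  "cnt P 0 = 0"
| "cnt P (Suc n) = cnt P n + (if P n then 1 else 0)"

lemma cnt_mono: "m \<le> n \<Longrightarrow> cnt P m \<le> cnt P n"
  by (induction n) (auto simp: le_Suc_eq)

lemma cnt_inj_aux: "P m \<Longrightarrow> m < n \<Longrightarrow> cnt P m < cnt P n"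
proof -
  assume "P m" "m < n"
  have "cnt P (Suc m) \<le> cnt P n" by (rule cnt_mono) (use \<open>m < n\<close> in simp)
  then show ?thesis using \<open>P m\<close> by simp
qed

lemma cnt_inj: "P m \<Longrightarrow> P n \<Longrightarrow> cnt P m = cnt P n \<Longrightarrow> m = n"
  by (metis cnt_inj_aux linorder_neqE_nat less_irrefl)

definition pick :: "(nat \<Rightarrow> bool) \<Rightarrow> (nat \<Rightarrow> nat) \<Rightarrow> nat \<Rightarrow> nat" where
  "pick P ch k = (if \<exists>n. P n \<and> cnt P n = k then ch (SOME n. P n \<and> cnt P n = k) else 0)"

lemma pick_at: assumes "P n" shows "pick P ch (cnt P n) = ch n"
proof -
  have ex: "\<exists>m. P m \<and> cnt P m = cnt P n" using assms by blast
  then have "P (SOME m. P m \<and> cnt P m = cnt P n) \<and> cnt P (SOME m. P m \<and> cnt P m = cnt P n) = cnt P n"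
    by (rule someI_ex)
  then have "(SOME m. P m \<and> cnt P m = cnt P n) = n" using cnt_inj assms by blast
  then show ?thesis using ex unfolding pick_def by simp
qed

lemma pick_range: "0 \<in> A \<Longrightarrow> (\<And>n. ch n \<in> A) \<Longrightarrow> pick P ch k \<in> A"
  unfolding pick_def by auto

definition isW :: "real \<Rightarrow> real \<times> real \<Rightarrow> bool" where
  "isW b z = (\<not> inE0 b z \<and> \<not> inE1 b z \<and> \<not> inE2 b z \<and> (inC01 b z \<or> inC12 b z \<or> inC02 b z))"
definition isU :: "real \<Rightarrow> real \<times> real \<Rightarrow> bool" where
  "isU b z = (\<not> inE0 b z \<and> \<not> inE1 b z \<and> \<not> inE2 b z \<and> \<not> (inC01 b z \<or> inC12 b z \<or> inC02 b z) \<and> inC012 b z)"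
definition chW :: "real \<Rightarrow> real \<times> real \<Rightarrow> nat \<Rightarrow> nat" where
  "chW b z c = (if inC01 b z then (if c = 0 then 0 else 1)
     else if inC12 b z then (if c = 1 then 0 else 1) else (if c = 0 then 0 else 1))"

lemma region:
  assumes "1 < b" "(x', y') \<in> S_beta b" "c \<in> {0,1,2}"
    "b * x = fst (qv c) + x'" "b * y = snd (qv c) + y'"
  shows "c = 0 \<Longrightarrow> x + y \<le> 1/(b*(b-1))" "c = 1 \<Longrightarrow> x \<ge> 1/b" "c = 2 \<Longrightarrow> y \<ge> 1/b"
proof -
  have b0: "b > 0" using assms by simp
  have xx: "x = (fst (qv c) + x') / b" "y = (snd (qv c) + y') / b"
    using assms(4,5) b0 by (simp_all add: field_simps)
  have s: "x' \<ge> 0" "y' \<ge> 0" "x' + y' \<le> 1/(b-1)" using assms(2) by (auto simp: S_beta_def)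
  show "c = 0 \<Longrightarrow> x + y \<le> 1/(b*(b-1))"
  proof -
    assume "c = 0"
    then have "x + y = (x' + y') / b" using xx by (simp add: qv_def add_divide_distrib)
    also have "\<dots> \<le> (1/(b-1)) / b" using s b0 by (intro divide_right_mono) auto
    also have "\<dots> = 1/(b*(b-1))" by (simp add: mult.commute)
    finally show ?thesis .
  qed
  show "c = 1 \<Longrightarrow> x \<ge> 1/b" using xx s b0 by (simp add: qv_def divide_right_mono)
  show "c = 2 \<Longrightarrow> y \<ge> 1/b" using xx s b0 by (simp add: qv_def divide_right_mono)
qed

lemma digit_ok:
  assumes "(x, y) \<in> S_beta b" "c \<in> {0,1,2::nat}"
    "c = 0 \<Longrightarrow> x + y \<le> 1/(b*(b-1))" "c = 1 \<Longrightarrow> x \<ge> 1/b" "c = 2 \<Longrightarrow> y \<ge> 1/b"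
    "isW b (x,y) \<Longrightarrow> w 0 = chW b (x,y) c" "isU b (x,y) \<Longrightarrow> u 0 = c"
  shows "digit_idx b (w, u, (x, y)) = c"
proof -
  have F1: "inE0 b (x,y) \<Longrightarrow> c = 0" using assms(2-5) unfolding inE0_def by auto
  have F2: "inE1 b (x,y) \<Longrightarrow> c = 1" using assms(2-5) unfolding inE1_def by auto
  have F3: "inE2 b (x,y) \<Longrightarrow> c = 2" using assms(2-5) unfolding inE2_def by auto
  have F4: "inC01 b (x,y) \<Longrightarrow> c \<noteq> 2" using assms(2-5) unfolding inC01_def by auto
  have F5: "inC12 b (x,y) \<Longrightarrow> c \<noteq> 0" using assms(2-5) unfolding inC12_def by auto
  have F6: "inC02 b (x,y) \<Longrightarrow> c \<noteq> 1" using assms(2-5) unfolding inC02_def by auto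
  have F7: "inE0 b (x,y) \<or> inE1 b (x,y) \<or> inE2 b (x,y) \<or> inC01 b (x,y) \<or> inC12 b (x,y)
      \<or> inC02 b (x,y) \<or> inC012 b (x,y)"
    using assms(1) unfolding S_beta_def inE0_def inE1_def inE2_def inC01_def inC12_def inC02_def inC012_def
    by auto
  show ?thesis
    using F1 F2 F3 F4 F5 F6 F7 assms(2,6,7) unfolding digit_idx_def isW_def isU_def chW_def
    by auto
qed

lemma geom_sums: fixes b :: real assumes "1 < b" shows "(\<lambda>i. (1/b) ^ Suc i) sums (1/(b-1))"
proof -
  have "(\<lambda>i. (1/b) ^ i) sums (1 / (1 - 1/b))" using geometric_sums[of "1/b"] assms by simp
  then have "(\<lambda>i. (1/b) * (1/b) ^ i) sums ((1/b) * (1 / (1 - 1/b)))" by (rule sums_mult)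
  moreover have "(1/b) * (1 / (1 - 1/b)) = 1/(b-1)" using assms by (simp add: field_simps)
  ultimately show ?thesis by simp
qed

theorem theorem4p3:
  fixes \<beta> :: real and z :: "real \<times> real" and a :: "nat \<Rightarrow> real \<times> real"
  assumes "1 < \<beta>" and "\<beta> \<le> 3/2"
    and "z \<in> S_beta \<beta>"
    and "\<And>i. i \<ge> 1 \<Longrightarrow> a i \<in> {qv 0, qv 1, qv 2}"
    and "(\<lambda>i. (1/\<beta>) ^ Suc i *\<^sub>R a (Suc i)) sums z"
  shows "\<exists>\<omega> \<upsilon>. (\<forall>n. \<omega> n \<in> {0, 1}) \<and> (\<forall>n. \<upsilon> n \<in> {0, 1, 2}) \<and>
           (\<forall>i\<ge>1. a i = dn \<beta> i (\<omega>, \<upsilon>, z))"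
proof -
  have b0: "\<beta> > 0" using assms(1) by simp
  define f where "f i = (1/\<beta>) ^ Suc i *\<^sub>R a (Suc i)" for i
  define zz where "zz n = \<beta> ^ n *\<^sub>R (z - (\<Sum>i<n. f i))" for n
  have pw: "\<beta> ^ k * (1/\<beta>) ^ k = 1" for k
    using b0 by (simp add: power_mult_distrib[symmetric])
  have zsums: "(\<lambda>i. (1/\<beta>) ^ Suc i *\<^sub>R a (Suc (n+i))) sums zz n" for n
  proof -
    have "(\<lambda>i. f (i + n)) sums (z - (\<Sum>i<n. f i))"
      using assms(5) unfolding f_def[abs_def] by (rule sums_split_initial_segment)
    then have "(\<lambda>i. \<beta> ^ n *\<^sub>R f (i + n)) sums zz n"
      unfolding zz_def by (rule sums_scaleR_right)
    moreover have "\<beta> ^ n *\<^sub>R f (i + n) = (1/\<beta>) ^ Suc i *\<^sub>R a (Suc (n+i))" for i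
    proof -
      have "\<beta> ^ n * (1/\<beta>) ^ Suc (i + n) = (1/\<beta>) ^ Suc i * (\<beta> ^ n * (1/\<beta>) ^ n)"
        by (simp add: power_add algebra_simps)
      then show ?thesis unfolding f_def using pw by (simp add: add.commute)
    qed
    ultimately show ?thesis by simp
  qed
  have zz0: "zz 0 = z" by (simp add: zz_def)
  have zzS: "zz (Suc n) = \<beta> *\<^sub>R zz n - a (Suc n)" for n
  proof -
    have "zz (Suc n) = \<beta> *\<^sub>R zz n - (\<beta> ^ Suc n * (1/\<beta>) ^ Suc n) *\<^sub>R a (Suc n)"
      unfolding zz_def f_def by (simp add: algebra_simps)
    then show ?thesis using pw[of "Suc n"] by simp
  qed
  have amem: "a (Suc n) \<in> {(0,0),(1,0),(0,1)}" for n
    using assms(4)[of "Suc n"] by (auto simp: qv_def)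
  have zzmem: "zz n \<in> S_beta \<beta>" for n
  proof -
    let ?g = "\<lambda>i. (1/\<beta>) ^ Suc i *\<^sub>R a (Suc (n+i))"
    have s1: "(\<lambda>i. fst (?g i)) sums fst (zz n)"
      using bounded_linear.sums[OF bounded_linear_fst zsums] by simp
    have s2: "(\<lambda>i. snd (?g i)) sums snd (zz n)"
      using bounded_linear.sums[OF bounded_linear_snd zsums] by simp
    have s3: "(\<lambda>i. fst (?g i) + snd (?g i)) sums (fst (zz n) + snd (zz n))"
      using sums_add[OF s1 s2] .
    have gs: "(\<lambda>i. (1/\<beta>) ^ Suc i) sums (1/(\<beta>-1))" using geom_sums assms(1) .
    have t1: "fst (?g i) \<ge> 0" "snd (?g i) \<ge> 0" "fst (?g i) + snd (?g i) \<le> (1/\<beta>) ^ Suc i" for i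
      using amem[of "n+i"] b0 by auto
    have "fst (zz n) \<ge> 0" using sums_le[OF _ sums_zero s1] t1 by auto
    moreover have "snd (zz n) \<ge> 0" using sums_le[OF _ sums_zero s2] t1 by auto
    moreover have "fst (zz n) + snd (zz n) \<le> 1/(\<beta>-1)" using sums_le[OF _ s3 gs] t1 by auto
    ultimately show ?thesis unfolding S_beta_def by (cases "zz n") auto
  qed
  define c where "c n = (if a (Suc n) = qv 1 then 1 else if a (Suc n) = qv 2 then 2 else (0::nat))" for n
  have ac: "a (Suc n) = qv (c n)" for n using assms(4)[of "Suc n"] unfolding c_def by auto
  have crange: "c n \<in> {0,1,2}" for n unfolding c_def by auto
  define PW where "PW n = isW \<beta> (zz n)" for n
  define PU where "PU n = isU \<beta> (zz n)" for n
  define \<omega> where "\<omega> = pick PW (\<lambda>n. chW \<beta> (zz n) (c n))"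
  define \<upsilon> where "\<upsilon> = pick PU c"
  have dig: "digit_idx \<beta> (w, u, zz n) = c n"
    if "PW n \<Longrightarrow> w 0 = \<omega> (cnt PW n)" "PU n \<Longrightarrow> u 0 = \<upsilon> (cnt PU n)" for w u n
  proof -
    obtain x y where xy: "zz n = (x, y)" by (cases "zz n")
    obtain x' y' where xy': "zz (Suc n) = (x', y')" by (cases "zz (Suc n)")
    have e: "\<beta> * x = fst (qv (c n)) + x'" "\<beta> * y = snd (qv (c n)) + y'"
      using zzS[of n] xy xy' ac[of n] by (auto simp: prod_eq_iff)
    have m': "(x', y') \<in> S_beta \<beta>" using zzmem[of "Suc n"] xy' by simp
    note R = region[OF assms(1) m' crange e]
    show ?thesis unfolding xy
    proof (rule digit_ok)
      show "(x, y) \<in> S_beta \<beta>" using zzmem[of n] xy by simp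
      show "c n \<in> {0,1,2}" by (rule crange)
      show "c n = 0 \<Longrightarrow> x + y \<le> 1/(\<beta>*(\<beta>-1))" "c n = 1 \<Longrightarrow> x \<ge> 1/\<beta>" "c n = 2 \<Longrightarrow> y \<ge> 1/\<beta>"
        using R by auto
      show "isW \<beta> (x,y) \<Longrightarrow> w 0 = chW \<beta> (x,y) (c n)"
        using that(1) pick_at[of PW n "\<lambda>n. chW \<beta> (zz n) (c n)"] xy
        unfolding \<omega>_def PW_def by simp
      show "isU \<beta> (x,y) \<Longrightarrow> u 0 = c n"
        using that(2) pick_at[of PU n c] xy
        unfolding \<upsilon>_def PU_def by simp
    qed
  qed
  have iter: "(K_beta \<beta> ^^ n) (\<omega>, \<upsilon>, z) = (\<lambda>k. \<omega> (k + cnt PW n), \<lambda>k. \<upsilon> (k + cnt PU n), zz n)" for n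
  proof (induction n)
    case 0
    then show ?case using zz0 by simp
  next
    case (Suc n)
    have d: "digit_idx \<beta> (\<lambda>k. \<omega> (k + cnt PW n), \<lambda>k. \<upsilon> (k + cnt PU n), zz n) = c n"
      by (rule dig) auto
    have z': "\<beta> *\<^sub>R zz n - qv (c n) = zz (Suc n)" using zzS ac by simp
    show ?case
      using Suc d z' unfolding PW_def PU_def isW_def isU_def
      by (auto simp: K_beta_def shift_def Let_def)
  qed
  show ?thesis
  proof (intro exI conjI allI impI)
    show "\<omega> n \<in> {0,1}" for n unfolding \<omega>_def
      by (rule pick_range) (auto simp: chW_def)
    show "\<upsilon> n \<in> {0,1,2}" for n unfolding \<upsilon>_def
      by (rule pick_range) (use crange in auto)
    fix i :: nat assume "1 \<le> i"
    then obtain m where m: "i = Suc m" by (cases i) auto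
    have "dn \<beta> i (\<omega>, \<upsilon>, z) = qv (c m)"
      unfolding dn_def d1_def m using iter[of m] dig[where w="\<lambda>k. \<omega> (k + cnt PW m)" and u="\<lambda>k. \<upsilon> (k + cnt PU m)" and n=m]
      by simp
    then show "a i = dn \<beta> i (\<omega>, \<upsilon>, z)" using ac m by simp
  qed
qed

end
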